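(* Let $\lambda_1\neq\lambda_2$ be real numbers, $J_2=\mathrm{diag}(\lambda_1,\lambda_1,\lambda_2)$ and $h>0$. Let $\theta\in\mathbb{R}$ and define $$\phi=\frac{e^{\lambda_1h}-e^{\lambda_2h}}{(\lambda_1-\lambda_2)(1-\theta)+\theta(\lambda_1e^{\lambda_1h}-\lambda_2e^{\lambda_2h})},\qquad \psi=e^{\lambda_1h}(1-\phi\lambda_1\theta)-\phi\lambda_1(1-\theta).$$ Then (whenever these expressions are defined and $1-\phi\lambda_1\theta\neq0$, $1-\phi\lambda_2\theta\neq 0$) the difference scheme $$\frac{\mathbf{x}_{k+1}-\psi\mathbf{x}_k}{\phi}=J_2\big[\theta\mathbf{x}_{k+1}+(1-\theta)\mathbf{x}_k\big]$$ is exact for the system $\mathbf{x}'=J_2\mathbf{x}$.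
   Context: A one-step difference scheme with step size $h>0$ for $\mathbf{x}'=M\mathbf{x}$ is called exact if for every initial vector $\mathbf{x}_0$ the sequence $(\mathbf{x}_k)$ it generates satisfies $\mathbf{x}_k=\mathbf{x}(kh)$ for all $k\ge 0$, where $\mathbf{x}(t)$ solves $\mathbf{x}'=M\mathbf{x}$, $\mathbf{x}(0)=\mathbf{x}_0$. *)

theory Defs
  imports "HOL-Analysis.Analysis"
begin

definition ode_solution :: "real^'n^'n \<Rightarrow> real^'n \<Rightarrow> (real \<Rightarrow> real^'n) \<Rightarrow> bool" where
  "ode_solution M x0 x \<longleftrightarrow> x 0 = x0 \<and> (\<forall>t. (x has_vector_derivative (M *v x t)) (at t))"

definition exact_scheme :: "(real^'n \<Rightarrow> real^'n \<Rightarrow> bool) \<Rightarrow> real \<Rightarrow> real^'n^'n \<Rightarrow> bool" where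
  "exact_scheme step h M \<longleftrightarrow>
     (\<forall>x0 xs x. xs 0 = x0 \<and> (\<forall>k. step (xs k) (xs (Suc k))) \<and> ode_solution M x0 x
        \<longrightarrow> (\<forall>k. xs k = x (real k * h)))"

definition J2 :: "real \<Rightarrow> real \<Rightarrow> real^3^3" where
  "J2 l1 l2 = (\<chi> i j. if i = j then (vector [l1, l1, l2] :: real^3) $ i else 0)"

definition theta_scheme :: "real \<Rightarrow> real \<Rightarrow> real \<Rightarrow> real^'n^'n \<Rightarrow> real^'n \<Rightarrow> real^'n \<Rightarrow> bool" where
  "theta_scheme phi psi theta M xk xk1 \<longleftrightarrow>
     (1 / phi) *\<^sub>R (xk1 - psi *\<^sub>R xk) = M *v (theta *\<^sub>R xk1 + (1 - theta) *\<^sub>R xk)"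

end

theory Submission
  imports Defs
begin

definition lam :: "real \<Rightarrow> real \<Rightarrow> 3 \<Rightarrow> real" where
  "lam l1 l2 i = (vector [l1, l1, l2] :: real^3) $ i"

lemma sum_delta_aux: fixes i :: "'a::finite" shows "(\<Sum>j\<in>UNIV. (if i = j then c else 0) * (w j::real)) = c * w i"
proof -
  have "(\<Sum>j\<in>UNIV. (if i = j then c else 0) * w j) = (\<Sum>j\<in>UNIV. if i = j then c * w j else 0)"
    by (rule sum.cong) auto
  then show ?thesis by simp
qed

lemma J2_mult: "(J2 l1 l2 *v v) $ i = lam l1 l2 i * v $ i"
  unfolding J2_def matrix_vector_mult_def lam_def
  by (simp only: vec_lambda_beta sum_delta_aux)

lemma comp_deriv:
  assumes "(x has_vector_derivative v) (at t)"
  shows "((\<lambda>s. x s $ i) has_real_derivative v $ i) (at t)"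
proof -
  have "((\<lambda>s. x s $ i) has_derivative (\<lambda>s. (s *\<^sub>R v) $ i)) (at t)"
    using bounded_linear.has_derivative[OF bounded_linear_vec_nth assms[unfolded has_vector_derivative_def]] .
  moreover have "(\<lambda>s. s * v $ i) = (*) (v $ i)" by (auto simp: fun_eq_iff)
  ultimately show ?thesis by (simp add: has_field_derivative_def)
qed

lemma ode_sol_gen:
  fixes x :: "real \<Rightarrow> real"
  assumes d: "\<And>s. (x has_real_derivative l * x s) (at s)"
  shows "x t = exp (l * t) * x 0"
proof -
  have D: "((\<lambda>s. exp (- l * s) * x s) has_real_derivative 0) (at s within UNIV)" for s
  proof -
    have e: "((\<lambda>s. exp (- l * s)) has_real_derivative exp (- l * s) * (- l)) (at s)"
      by (auto intro!: derivative_eq_intros)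
    have "((\<lambda>s. exp (- l * s) * x s) has_real_derivative
        exp (- l * s) * (l * x s) + (exp (- l * s) * (- l)) * x s) (at s)"
      by (rule DERIV_mult'[OF e d])
    moreover have "exp (- l * s) * (l * x s) + (exp (- l * s) * (- l)) * x s = 0"
      by (simp add: algebra_simps)
    ultimately show ?thesis by simp
  qed
  have "\<exists>c. \<forall>s\<in>UNIV. exp (- l * s) * x s = c"
    by (rule has_field_derivative_zero_constant[OF convex_UNIV D])
  then obtain c where c0: "\<forall>s\<in>UNIV. exp (- l * s) * x s = c" by (elim exE)
  have c: "exp (- l * s) * x s = c" for s using c0 by simp
  have "exp (l * t) * (exp (- l * t) * x t) = exp (l * t) * x 0" using c[of 0] c[of t] by simp
  moreover have "exp (l * t) * (exp (- l * t) * x t) = x t"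
    by (simp add: mult.assoc[symmetric] exp_add[symmetric])
  ultimately show ?thesis by simp
qed

lemma ode_sol:
  assumes "ode_solution (J2 l1 l2) x0 x"
  shows "x t $ i = exp (lam l1 l2 i * t) * x0 $ i"
proof -
  have d: "((\<lambda>s. x s $ i) has_real_derivative lam l1 l2 i * x s $ i) (at s)" for s
  proof -
    from assms have "(x has_vector_derivative (J2 l1 l2 *v x s)) (at s)"
      unfolding ode_solution_def by blast
    then have "((\<lambda>s. x s $ i) has_real_derivative (J2 l1 l2 *v x s) $ i) (at s)"
      by (rule comp_deriv)
    then show ?thesis by (simp only: J2_mult)
  qed
  have "x 0 = x0" using assms unfolding ode_solution_def by blast
  then show ?thesis using ode_sol_gen[of "\<lambda>s. x s $ i", OF d] by simp
qed

theorem theorem6: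
  fixes l1 l2 h theta phi psi :: real
  assumes "l1 \<noteq> l2" and "h > 0"
    and "(l1 - l2) * (1 - theta) + theta * (l1 * exp (l1 * h) - l2 * exp (l2 * h)) \<noteq> 0"
    and "phi = (exp (l1 * h) - exp (l2 * h)) /
               ((l1 - l2) * (1 - theta) + theta * (l1 * exp (l1 * h) - l2 * exp (l2 * h)))"
    and "psi = exp (l1 * h) * (1 - phi * l1 * theta) - phi * l1 * (1 - theta)"
    and "1 - phi * l1 * theta \<noteq> 0" and "1 - phi * l2 * theta \<noteq> 0"
  shows "exact_scheme (theta_scheme phi psi theta (J2 l1 l2)) h (J2 l1 l2)"
proof -
  let ?D = "(l1 - l2) * (1 - theta) + theta * (l1 * exp (l1 * h) - l2 * exp (l2 * h))"
  have e: "exp (l1 * h) \<noteq> exp (l2 * h)" using assms(1,2) by simp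
  have phi0: "phi \<noteq> 0" using assms(3,4) e by simp
  have phiD: "phi * ?D = exp (l1 * h) - exp (l2 * h)" using assms(3,4) by simp
  have key: "b = exp (l * h) * a"
    if l: "l = l1 \<or> l = l2" and st: "(1 / phi) * (b - psi * a) = l * (theta * b + (1 - theta) * a)"
    for l a b
  proof -
    have nz: "1 - phi * l * theta \<noteq> 0" using l assms(6,7) by auto
    have st2: "b - psi * a = phi * l * (theta * b + (1 - theta) * a)"
      using st phi0 by (simp add: field_simps)
    have r: "psi + phi * l * (1 - theta) = exp (l * h) * (1 - phi * l * theta)"
      using l
    proof
      assume "l = l1" then show ?thesis using assms(5) by (simp add: algebra_simps)
    next
      assume "l = l2" then show ?thesis using assms(5) phiD by (simp add: algebra_simps)
    qed
    have "b * (1 - phi * l * theta) = (psi + phi * l * (1 - theta)) * a"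
      using st2 by (simp add: algebra_simps)
    also have "\<dots> = exp (l * h) * a * (1 - phi * l * theta)" using r by simp
    finally show ?thesis using nz by simp
  qed
  have lamc: "lam l1 l2 i = l1 \<or> lam l1 l2 i = l2" for i
    unfolding lam_def using exhaust_3[of i] by auto
  show ?thesis unfolding exact_scheme_def
  proof (intro allI impI, elim conjE)
    fix x0 xs x k
    assume xs0: "xs 0 = x0" and stp: "\<forall>k. theta_scheme phi psi theta (J2 l1 l2) (xs k) (xs (Suc k))"
      and sol: "ode_solution (J2 l1 l2) x0 x"
    have "xs k $ i = exp (lam l1 l2 i * h) ^ k * x0 $ i" for i
    proof (induction k)
      case 0 then show ?case using xs0 by simp
    next
      case (Suc k)
      have "(1 / phi) * (xs (Suc k) $ i - psi * xs k $ i)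
          = lam l1 l2 i * (theta * xs (Suc k) $ i + (1 - theta) * xs k $ i)"
        using arg_cong[OF stp[rule_format, of k, unfolded theta_scheme_def], of "\<lambda>v. v $ i"]
        by (simp add: J2_mult)
      then have "xs (Suc k) $ i = exp (lam l1 l2 i * h) * xs k $ i"
        by (rule key[OF lamc])
      then show ?case using Suc by simp
    qed
    then show "xs k = x (real k * h)"
      using ode_sol[OF sol] by (simp add: vec_eq_iff exp_of_nat_mult[symmetric] mult_ac)
  qed
qed

end
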